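(* Let $X$ be a nonsingular projective toric variety. If $\beta\in H_2(X,\mathbb{Z})$ satisfies $\int_\beta A>0$ for every ample divisor $A$, then the set $\{D \text{ toric divisor} : \int_\beta D>0\}$ contains a primitive set.
   Context: Toric divisors are the torus-invariant prime divisors of $X$. A primitive set is a set $\{D_1,\ldots,D_k\}$ of toric divisors with $D_1\cap\cdots\cap D_k=\emptyset$ such that every proper subset has nonempty intersection. *)

theory Defs
  imports "HOL-Analysis.Analysis"
begin

text \<open>A toric variety is encoded by its fan in N_R = real^'n, N = integer points.
  The rays are v 0, ..., v (m-1); toric divisor D_i corresponds to ray v i.
  A cone of the fan is given by the set S of indices of its generating rays
  (smooth cones are simplicial, so this is unambiguous).\<close>

definition integral_vec :: "real^'n \<Rightarrow> bool" where
  "integral_vec x \<longleftrightarrow> (\<forall>k. x $ k \<in> \<int>)"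

definition cone_gen :: "(nat \<Rightarrow> real^'n) \<Rightarrow> nat set \<Rightarrow> (real^'n) set" where
  "cone_gen v S = {x. \<exists>c. (\<forall>i\<in>S. c i \<ge> 0) \<and> x = (\<Sum>i\<in>S. c i *\<^sub>R v i)}"

text \<open>The cone generated by v`S is smooth: its generators are part of a Z-basis of N.\<close>
definition smooth_cone :: "(nat \<Rightarrow> real^'n) \<Rightarrow> nat set \<Rightarrow> bool" where
  "smooth_cone v S \<longleftrightarrow>
     (\<exists>B :: real^'n^'n. \<exists>f :: nat \<Rightarrow> 'n.
        (\<forall>k. integral_vec (B $ k)) \<and> (det B = 1 \<or> det B = -1) \<and>
        inj_on f S \<and> (\<forall>i\<in>S. B $ (f i) = v i))"

definition smooth_complete_fan ::
  "nat \<Rightarrow> (nat \<Rightarrow> real^'n) \<Rightarrow> nat set set \<Rightarrow> bool" where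
  "smooth_complete_fan m v Fan \<longleftrightarrow>
     inj_on v {..<m} \<and>
     (\<forall>i<m. integral_vec (v i)) \<and>
     (\<forall>S\<in>Fan. S \<subseteq> {..<m}) \<and>
     (\<forall>i<m. {i} \<in> Fan) \<and>
     (\<forall>S\<in>Fan. \<forall>T. T \<subseteq> S \<longrightarrow> T \<in> Fan) \<and>
     (\<forall>S\<in>Fan. smooth_cone v S) \<and>
     (\<forall>S\<in>Fan. \<forall>T\<in>Fan. cone_gen v S \<inter> cone_gen v T = cone_gen v (S \<inter> T)) \<and>
     (\<Union>S\<in>Fan. cone_gen v S) = UNIV"

definition maximal_cone :: "nat set set \<Rightarrow> nat set \<Rightarrow> bool" where
  "maximal_cone Fan S \<longleftrightarrow> S \<in> Fan \<and> \<not> (\<exists>T\<in>Fan. S \<subset> T)"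

text \<open>The torus-invariant divisor D = sum_i a_i D_i is ample iff its support function is
  strictly convex: for each maximal cone sigma there is u in M_R with
  <u, v_i> = -a_i for rays of sigma and <u, v_i> > -a_i for the other rays.\<close>
definition ample_div ::
  "nat \<Rightarrow> (nat \<Rightarrow> real^'n) \<Rightarrow> nat set set \<Rightarrow> (nat \<Rightarrow> int) \<Rightarrow> bool" where
  "ample_div m v Fan a \<longleftrightarrow>
     (\<forall>S. maximal_cone Fan S \<longrightarrow>
        (\<exists>u :: real^'n. (\<forall>i\<in>S. u \<bullet> v i = - of_int (a i)) \<and>
                        (\<forall>i<m. i \<notin> S \<longrightarrow> u \<bullet> v i > - of_int (a i))))"

definition projective_fan :: "nat \<Rightarrow> (nat \<Rightarrow> real^'n) \<Rightarrow> nat set set \<Rightarrow> bool" where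
  "projective_fan m v Fan \<longleftrightarrow> (\<exists>a. ample_div m v Fan a)"

text \<open>H_2(X,Z) of a smooth complete toric variety = lattice of integer relations
  b among the rays (sum b_i v_i = 0), with the pairing int_beta D_i = b_i.\<close>
definition curve_class :: "nat \<Rightarrow> (nat \<Rightarrow> real^'n) \<Rightarrow> (nat \<Rightarrow> int) \<Rightarrow> bool" where
  "curve_class m v b \<longleftrightarrow> (\<forall>i. i \<ge> m \<longrightarrow> b i = 0) \<and> (\<Sum>i<m. of_int (b i) *\<^sub>R v i) = 0"

definition intersect :: "nat \<Rightarrow> (nat \<Rightarrow> int) \<Rightarrow> (nat \<Rightarrow> int) \<Rightarrow> int" where
  "intersect m b a = (\<Sum>i<m. a i * b i)"

text \<open>D_{i1} \<inter> ... \<inter> D_{ik} is nonempty iff {v_i1..v_ik} generate a cone of the fan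
  (orbit-cone correspondence). Primitive set of toric divisors (by ray index).\<close>
definition primitive_set :: "nat set set \<Rightarrow> nat set \<Rightarrow> bool" where
  "primitive_set Fan P \<longleftrightarrow> P \<notin> Fan \<and> (\<forall>Q. Q \<subset> P \<longrightarrow> Q \<in> Fan)"

end

theory Submission
  imports Defs
begin

theorem corollary2p2:
  fixes m :: nat and v :: "nat \<Rightarrow> real^'n" and Fan :: "nat set set" and b :: "nat \<Rightarrow> int"
  assumes "smooth_complete_fan m v Fan"
    and "projective_fan m v Fan"
    and "curve_class m v b"
    and "\<forall>a. ample_div m v Fan a \<longrightarrow> intersect m b a > 0"
  shows "\<exists>P. P \<subseteq> {i. i < m \<and> b i > 0} \<and> primitive_set Fan P"
proof (rule ccontr)
  assume nP: "\<not> ?thesis"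
  define I where "I = {i. i < m \<and> b i > 0}"
  have finI: "finite I" unfolding I_def by auto
  have IF: "I \<in> Fan"
  proof (rule ccontr)
    assume "I \<notin> Fan"
    define C where "C = {P. P \<subseteq> I \<and> P \<notin> Fan}"
    have "finite C" unfolding C_def using finI by auto
    moreover have "C \<noteq> {}" using \<open>I \<notin> Fan\<close> unfolding C_def by auto
    ultimately obtain P where P: "P \<in> C" "\<forall>Q\<in>C. Q \<le> P \<longrightarrow> P = Q"
      using finite_has_minimal by blast
    have "primitive_set Fan P" unfolding primitive_set_def
    proof (intro conjI allI impI)
      show "P \<notin> Fan" using P unfolding C_def by auto
    next
      fix Q assume "Q \<subset> P"
      then show "Q \<in> Fan" using P unfolding C_def by auto
    qed
    then show False using nP P unfolding C_def I_def by auto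
  qed
  have sub: "\<forall>S\<in>Fan. S \<subseteq> {..<m}" using assms(1) unfolding smooth_complete_fan_def by auto
  have "Fan \<subseteq> Pow {..<m}" using sub by auto
  hence finF: "finite Fan" by (rule finite_subset) auto
  define D where "D = {T\<in>Fan. I \<subseteq> T}"
  have "finite D" "D \<noteq> {}" using finF IF unfolding D_def by auto
  then obtain S where S: "S \<in> D" "\<forall>T\<in>D. S \<le> T \<longrightarrow> S = T"
    using finite_has_maximal by blast
  have maxS: "maximal_cone Fan S" unfolding maximal_cone_def
    using S unfolding D_def by auto
  obtain a0 where a0: "ample_div m v Fan a0" using assms(2) unfolding projective_fan_def by auto
  have pos: "intersect m b a0 > 0" using assms(4) a0 by auto
  obtain u where u1: "\<forall>i\<in>S. u \<bullet> v i = - of_int (a0 i)"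
    and u2: "\<forall>i<m. i \<notin> S \<longrightarrow> u \<bullet> v i > - of_int (a0 i)"
    using a0 maxS unfolding ample_div_def by blast
  have rel: "(\<Sum>i<m. of_int (b i) *\<^sub>R v i) = 0" using assms(3) unfolding curve_class_def by auto
  have z: "(\<Sum>i<m. (u \<bullet> v i) * of_int (b i)) = 0"
  proof -
    have "(\<Sum>i<m. (u \<bullet> v i) * of_int (b i)) = u \<bullet> (\<Sum>i<m. of_int (b i) *\<^sub>R v i)"
      by (simp add: inner_sum_right mult.commute)
    also have "\<dots> = 0" using rel by simp
    finally show ?thesis .
  qed
  have "real_of_int (intersect m b a0) = (\<Sum>i<m. of_int (a0 i) * of_int (b i))"
    unfolding intersect_def by simp
  also have "\<dots> = (\<Sum>i<m. (of_int (a0 i) + u \<bullet> v i) * of_int (b i))"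
    using z by (simp add: distrib_right sum.distrib)
  also have "\<dots> \<le> 0"
  proof (rule sum_nonpos)
    fix i assume i: "i \<in> {..<m}"
    show "(of_int (a0 i) + u \<bullet> v i) * of_int (b i) \<le> (0::real)"
    proof (cases "i \<in> S")
      case True then show ?thesis using u1 by simp
    next
      case False
      then have "i \<notin> I" using S unfolding D_def by auto
      then have "b i \<le> 0" using i unfolding I_def by auto
      moreover have "of_int (a0 i) + u \<bullet> v i > 0" using u2 i False by force
      ultimately show ?thesis by (simp add: mult_nonneg_nonpos)
    qed
  qed
  finally show False using pos by simp
qed

end
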